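(* Let $\Gamma$ be a connected extended Coxeter diagram with all vertex labels finite, and let $H^0=\{x\in\mathbb{C}^I: H_\Gamma(x,y)=0\text{ for all }y\in\mathbb{C}^I\}$ be the kernel of $H_\Gamma$. Then $G_\Gamma$ acts trivially on $H^0$ via $\rho$, and every proper $\rho(G_\Gamma)$-invariant subspace of $\mathbb{C}^I$ is contained in $H^0$.
   Context: An extended Coxeter diagram $\Gamma$ is a finite simplicial graph with vertex set $I$, labels $p_i\in\mathbb{Z}_{\ge2}\cup\{\infty\}$ on vertices and $m_{ij}\in\mathbb{Z}_{\ge3}\cup\{\infty\}$ on edges ($m_{ij}=2$ for non-edges, and $p_i=p_j$ whenever $m_{ij}$ is odd). $G_\Gamma=\langle s_i, i\in I\mid \mathrm{prod}(s_i,s_j;m_{ij})=\mathrm{prod}(s_j,s_i;m_{ij}),\ s_i^{p_i}=1\rangle$, with $\mathrm{prod}(a,b;m)$ the alternating word $aba\cdots$ of length $m$ (relations with $\infty$ omitted). For distinct $i,j$ joined by an edge set $\alpha_{ij}=-\left(\frac{\cos(\pi/p_i-\pi/p_j)+\cos(2\pi/m_{ij})}{2\sin(\pi/p_i)\sin(\pi/p_j)}\right)^{1/2}$; set $\alpha_{ii}=1$ and $\alpha_{ij}=0$ if $i\ne j$ are not joined by an edge. $H_\Gamma=\langle\cdot,\cdot\rangle$ is the Hermitian form on $\mathbb{C}^I$ with basis $\{e_i\}$ given by $\langle e_i,e_j\rangle=\alpha_{ij}$. The representation $\rho=\rho_\Gamma$ of $G_\Gamma$ on $\mathbb{C}^I$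 sends $s_i$ to the complex reflection $R_i(z)=z+(\zeta_{p_i}-1)\langle z,e_i\rangle e_i$, where $\zeta_{p_i}=\exp(2\pi\sqrt{-1}/p_i)$. *)

theory Defs
  imports "HOL-Analysis.Analysis" "HOL-Library.Extended_Nat"
begin

text \<open>Extended Coxeter diagram on the finite vertex type 'i, with finite vertex
  labels p i (natural numbers) and edge labels m i j in enat (infinity allowed);
  m i j = 2 encodes a non-edge.\<close>

definition ext_coxeter_diagram :: "('i \<Rightarrow> nat) \<Rightarrow> ('i \<Rightarrow> 'i \<Rightarrow> enat) \<Rightarrow> bool" where
  "ext_coxeter_diagram p m \<longleftrightarrow>
     (\<forall>i. p i \<ge> 2) \<and>
     (\<forall>i j. m i j = m j i) \<and>
     (\<forall>i j. i \<noteq> j \<longrightarrow> m i j \<ge> 2) \<and>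
     (\<forall>i j k. i \<noteq> j \<and> m i j = enat k \<and> odd k \<longrightarrow> p i = p j)"

definition is_edge :: "('i \<Rightarrow> 'i \<Rightarrow> enat) \<Rightarrow> 'i \<Rightarrow> 'i \<Rightarrow> bool" where
  "is_edge m i j \<longleftrightarrow> i \<noteq> j \<and> m i j \<noteq> 2"

definition diagram_connected :: "('i \<Rightarrow> 'i \<Rightarrow> enat) \<Rightarrow> bool" where
  "diagram_connected m \<longleftrightarrow> (\<forall>i j. (i, j) \<in> {(a, b). is_edge m a b}\<^sup>*)"

text \<open>cos(2 pi / m), with the value cos 0 = 1 for m = infinity.\<close>
definition cos_2pi_over :: "enat \<Rightarrow> real" where
  "cos_2pi_over e = (case e of enat k \<Rightarrow> cos (2 * pi / real k) | \<infinity> \<Rightarrow> 1)"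

definition alpha :: "('i \<Rightarrow> nat) \<Rightarrow> ('i \<Rightarrow> 'i \<Rightarrow> enat) \<Rightarrow> 'i \<Rightarrow> 'i \<Rightarrow> real" where
  "alpha p m i j =
     (if i = j then 1
      else if is_edge m i j then
        - sqrt ((cos (pi / real (p i) - pi / real (p j)) + cos_2pi_over (m i j))
                / (2 * sin (pi / real (p i)) * sin (pi / real (p j))))
      else 0)"

definition herm :: "('i::finite \<Rightarrow> nat) \<Rightarrow> ('i \<Rightarrow> 'i \<Rightarrow> enat)
                     \<Rightarrow> ('i \<Rightarrow> complex) \<Rightarrow> ('i \<Rightarrow> complex) \<Rightarrow> complex" where
  "herm p m x y = (\<Sum>i\<in>UNIV. \<Sum>j\<in>UNIV. x i * complex_of_real (alpha p m i j) * cnj (y j))"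

definition basis_vec :: "'i \<Rightarrow> ('i \<Rightarrow> complex)" where
  "basis_vec i = (\<lambda>j. if j = i then 1 else 0)"

definition herm_kernel :: "('i::finite \<Rightarrow> nat) \<Rightarrow> ('i \<Rightarrow> 'i \<Rightarrow> enat) \<Rightarrow> ('i \<Rightarrow> complex) set" where
  "herm_kernel p m = {x. \<forall>y. herm p m x y = 0}"

definition refl :: "('i::finite \<Rightarrow> nat) \<Rightarrow> ('i \<Rightarrow> 'i \<Rightarrow> enat) \<Rightarrow> 'i
                     \<Rightarrow> ('i \<Rightarrow> complex) \<Rightarrow> ('i \<Rightarrow> complex)" where
  "refl p m i z = (\<lambda>k. z k + (cis (2 * pi / real (p i)) - 1) * herm p m z (basis_vec i) * basis_vec i k)"

text \<open>The image rho(G_Gamma): the group generated by the reflections R_i, i.e. all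
  finite products of the R_i and their inverses.\<close>
inductive_set rho_group :: "('i::finite \<Rightarrow> nat) \<Rightarrow> ('i \<Rightarrow> 'i \<Rightarrow> enat)
                              \<Rightarrow> (('i \<Rightarrow> complex) \<Rightarrow> ('i \<Rightarrow> complex)) set"
  for p m where
    rg_id: "id \<in> rho_group p m"
  | rg_gen: "g \<in> rho_group p m \<Longrightarrow> refl p m i \<circ> g \<in> rho_group p m"
  | rg_inv: "g \<in> rho_group p m \<Longrightarrow> inv (refl p m i) \<circ> g \<in> rho_group p m"

definition csubspace :: "('i \<Rightarrow> complex) set \<Rightarrow> bool" where
  "csubspace V \<longleftrightarrow> (\<lambda>k. 0) \<in> V \<and> (\<forall>x\<in>V. \<forall>y\<in>V. (\<lambda>k. x k + y k) \<in> V) \<and>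
                   (\<forall>c. \<forall>x\<in>V. (\<lambda>k. c * x k) \<in> V)"

end

theory Submission
  imports Defs
begin

lemma herm_basis:
  "herm p m z (basis_vec i) = (\<Sum>k\<in>UNIV. z k * complex_of_real (alpha p m k i))"
  unfolding herm_def basis_vec_def
  by (simp add: if_distrib sum.delta cong: if_cong)

lemma herm_expand:
  "herm p m x y = (\<Sum>j\<in>UNIV. herm p m x (basis_vec j) * cnj (y j))"
proof -
  have "(\<Sum>j\<in>UNIV. herm p m x (basis_vec j) * cnj (y j))
     = (\<Sum>j\<in>UNIV. \<Sum>i\<in>UNIV. x i * complex_of_real (alpha p m i j) * cnj (y j))"
    unfolding herm_basis by (simp add: sum_distrib_right)
  also have "\<dots> = herm p m x y" unfolding herm_def by (rule sum.swap)
  finally show ?thesis by simp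
qed

lemma alpha_self: "alpha p m i i = 1"
  by (simp add: alpha_def)

lemma refl_h:
  "herm p m (refl p m i z) (basis_vec i) = cis (2 * pi / real (p i)) * herm p m z (basis_vec i)"
proof -
  let ?c = "cis (2 * pi / real (p i)) - 1"
  let ?h = "herm p m z (basis_vec i)"
  have "herm p m (refl p m i z) (basis_vec i)
     = (\<Sum>k\<in>UNIV. z k * complex_of_real (alpha p m k i)) +
       (\<Sum>k\<in>UNIV. ?c * ?h * basis_vec i k * complex_of_real (alpha p m k i))"
    apply (subst herm_basis[of p m "refl p m i z"])
    by (simp add: refl_def distrib_right sum.distrib)
  also have "(\<Sum>k\<in>UNIV. ?c * ?h * basis_vec i k * complex_of_real (alpha p m k i)) = ?c * ?h"
  proof -
    have "\<And>k. ?c * ?h * basis_vec i k * complex_of_real (alpha p m k i) = (if k = i then ?c * ?h else 0)"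
      by (simp add: basis_vec_def alpha_self)
    thus ?thesis by simp
  qed
  finally show ?thesis by (simp add: herm_basis[symmetric] algebra_simps)
qed

lemma cis_ne0: "cis x \<noteq> 0" by simp

lemma refl_inj: "inj (refl p m i)"
proof (rule injI)
  fix z w assume eq: "refl p m i z = refl p m i w"
  hence "cis (2 * pi / real (p i)) * herm p m z (basis_vec i) = cis (2 * pi / real (p i)) * herm p m w (basis_vec i)"
    by (metis refl_h)
  hence "herm p m z (basis_vec i) = herm p m w (basis_vec i)" by simp
  with eq show "z = w" unfolding refl_def by (auto simp: fun_eq_iff dest: fun_cong)
qed

lemma kernel_fix: "x \<in> herm_kernel p m \<Longrightarrow> refl p m i x = x"
  by (simp add: herm_kernel_def refl_def)

lemma kernel_fix_inv: "x \<in> herm_kernel p m \<Longrightarrow> inv (refl p m i) x = x"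
  by (metis kernel_fix refl_inj inv_f_f)

lemma part1: "g \<in> rho_group p m \<Longrightarrow> x \<in> herm_kernel p m \<Longrightarrow> g x = x"
  by (induction g rule: rho_group.induct) (auto simp: kernel_fix kernel_fix_inv)

lemma sin_pi_div_pos: "(n::nat) \<ge> 2 \<Longrightarrow> sin (pi / real n) > 0"
  by (rule sin_gt_zero) (auto simp: field_simps)

lemma cos_diff_pos:
  assumes "(a::nat) \<ge> 2" "(b::nat) \<ge> 2"
  shows "cos (pi / real a - pi / real b) > 0"
proof -
  have a1: "pi / real a \<le> pi / 2" "pi / real a > 0" using assms by (auto simp: field_simps)
  have b1: "pi / real b \<le> pi / 2" "pi / real b > 0" using assms by (auto simp: field_simps)
  show ?thesis by (rule cos_gt_zero_pi) (use a1 b1 in auto)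
qed

lemma alpha_edge_ne0:
  assumes D: "ext_coxeter_diagram p m" and E: "is_edge m i j"
  shows "alpha p m i j \<noteq> 0"
proof -
  have pi2: "p i \<ge> 2" "p j \<ge> 2" using D by (auto simp: ext_coxeter_diagram_def)
  have ij: "i \<noteq> j" "m i j \<noteq> 2" using E by (auto simp: is_edge_def)
  have m2: "m i j \<ge> 2" using D ij by (auto simp: ext_coxeter_diagram_def)
  have num: "cos (pi / real (p i) - pi / real (p j)) + cos_2pi_over (m i j) > 0"
  proof (cases "m i j")
    case infinity
    then show ?thesis using cos_diff_pos[OF pi2] by (simp add: cos_2pi_over_def)
  next
    case (enat k)
    have k3: "k \<ge> 3" using m2 ij enat by (auto simp: numeral_eq_enat)
    show ?thesis
    proof (cases "k = 3")
      case True
      hence "p i = p j" using D ij enat by (auto simp: ext_coxeter_diagram_def)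
      moreover have "cos (2 * pi / 3) = - 1 / 2"
      proof -
        have "cos (2 * pi / 3) = cos (pi - pi / 3)" by (simp add: field_simps)
        also have "\<dots> = - 1 / 2" by (simp only: cos_pi_minus cos_60)
        finally show ?thesis .
      qed
      ultimately show ?thesis using True enat by (simp add: cos_2pi_over_def)
    next
      case False
      hence k4: "k \<ge> 4" using k3 by simp
      have "cos (2 * pi / real k) \<ge> 0"
        by (rule cos_ge_zero) (use k4 pi_gt_zero in \<open>auto simp: field_simps intro: order_trans[of _ 0] mult_nonneg_nonneg\<close>)
      thus ?thesis using cos_diff_pos[OF pi2] enat by (simp add: cos_2pi_over_def)
    qed
  qed
  have den: "2 * sin (pi / real (p i)) * sin (pi / real (p j)) > 0"
    using sin_pi_div_pos[OF pi2(1)] sin_pi_div_pos[OF pi2(2)] by simp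
  have "sqrt ((cos (pi / real (p i) - pi / real (p j)) + cos_2pi_over (m i j))
                / (2 * sin (pi / real (p i)) * sin (pi / real (p j)))) > 0"
    using num den by simp
  thus ?thesis using E ij unfolding alpha_def by auto
qed

lemma refl_in_group: "refl p m i \<in> rho_group p m"
  using rho_group.rg_gen[OF rho_group.rg_id, of p m i] by simp

lemma basis_in_V:
  assumes S: "csubspace V" and inv: "refl p m i ` V \<subseteq> V" and v: "v \<in> V"
    and h: "herm p m v (basis_vec i) \<noteq> 0" and p2: "p i \<ge> 2"
  shows "basis_vec i \<in> V"
proof -
  let ?c = "cis (2 * pi / real (p i)) - 1"
  let ?C = "?c * herm p m v (basis_vec i)"
  have c0: "?c \<noteq> 0"
  proof
    assume "?c = 0"
    hence "cis (2 * pi / real (p i)) = 1" by simp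
    hence "Re (cis (2 * pi / real (p i))) = 1" by simp
    hence "cos (2 * pi / real (p i)) = 1" by simp
    then obtain n :: int where "2 * pi / real (p i) = 2 * pi * real_of_int n"
      by (auto simp: cos_one_2pi_int)
    hence eq: "1 = real (p i) * real_of_int n" using p2 by (simp add: field_simps)
    have "real (p i) \<ge> 2" using p2 by simp
    show False
    proof (cases "n \<ge> 1")
      case True
      hence "real_of_int n \<ge> 1" by simp
      hence "real (p i) * real_of_int n \<ge> 2" using \<open>real (p i) \<ge> 2\<close>
        using mult_mono[of 2 "real (p i)" 1 "real_of_int n"] by simp
      thus False using eq by simp
    next
      case False
      hence "real_of_int n \<le> 0" by simp
      hence "real (p i) * real_of_int n \<le> 0" by (simp add: mult_nonneg_nonpos)
      thus False using eq by simp
    qed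
  qed
  have C0: "?C \<noteq> 0" using c0 h by simp
  have r: "refl p m i v \<in> V" using inv v by auto
  have neg: "(\<lambda>k. (-1) * v k) \<in> V" using S v unfolding csubspace_def by blast
  have add: "\<And>x y. x \<in> V \<Longrightarrow> y \<in> V \<Longrightarrow> (\<lambda>k. x k + y k) \<in> V"
    using S unfolding csubspace_def by blast
  have "(\<lambda>k. refl p m i v k + (-1) * v k) \<in> V" using add[OF r neg] by simp
  moreover have "(\<lambda>k. refl p m i v k + (-1) * v k) = (\<lambda>k. ?C * basis_vec i k)"
    by (simp add: refl_def fun_eq_iff)
  ultimately have CV: "(\<lambda>k. ?C * basis_vec i k) \<in> V" by simp
  have sc: "\<And>c x. x \<in> V \<Longrightarrow> (\<lambda>k. c * x k) \<in> V"
    using S unfolding csubspace_def by blast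
  have "(\<lambda>k. inverse ?C * (?C * basis_vec i k)) \<in> V" using sc[OF CV] by simp
  moreover have "(\<lambda>k. inverse ?C * (?C * basis_vec i k)) = basis_vec i"
  proof
    fix k
    have inv1: "inverse ?C * ?C = 1" using C0 by (rule left_inverse)
    show "inverse ?C * (?C * basis_vec i k) = basis_vec i k"
      by (subst mult.assoc[symmetric, of "inverse ?C" ?C]) (simp only: inv1 mult_1_left)
  qed
  ultimately show ?thesis by simp
qed

lemma herm_basis_basis: "herm p m (basis_vec i) (basis_vec j) = complex_of_real (alpha p m i j)"
proof -
  have "\<And>k. basis_vec i k * complex_of_real (alpha p m k j) = (if k = i then complex_of_real (alpha p m i j) else 0)"
    by (simp add: basis_vec_def)
  thus ?thesis unfolding herm_basis by simp
qed

lemma csubspace_sum: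
  assumes S: "csubspace V" and B: "\<And>i. i \<in> A \<Longrightarrow> f i \<in> V" and F: "finite A"
  shows "(\<lambda>k. \<Sum>i\<in>A. c i * f i k) \<in> V"
  using F B
proof (induction A rule: finite_induct)
  case empty then show ?case using S by (simp add: csubspace_def)
next
  case (insert a A)
  have "(\<lambda>k. c a * f a k) \<in> V" using S insert by (simp add: csubspace_def)
  moreover have "(\<lambda>k. \<Sum>i\<in>A. c i * f i k) \<in> V" using insert by simp
  moreover have add: "\<And>x y. x \<in> V \<Longrightarrow> y \<in> V \<Longrightarrow> (\<lambda>k. x k + y k) \<in> V"
    using S unfolding csubspace_def by blast
  ultimately have "(\<lambda>k. c a * f a k + (\<Sum>i\<in>A. c i * f i k)) \<in> V"
    using add by fastforce
  thus ?case using insert by simp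
qed

theorem lemma2p3:
  fixes p :: "'i::finite \<Rightarrow> nat" and m :: "'i \<Rightarrow> 'i \<Rightarrow> enat"
  assumes "ext_coxeter_diagram p m"
    and "diagram_connected m"
  shows "(\<forall>g\<in>rho_group p m. \<forall>x\<in>herm_kernel p m. g x = x) \<and>
         (\<forall>V. csubspace V \<and> V \<noteq> UNIV \<and> (\<forall>g\<in>rho_group p m. g ` V \<subseteq> V)
               \<longrightarrow> V \<subseteq> herm_kernel p m)"
proof (intro conjI ballI allI impI)
  fix g x assume "g \<in> rho_group p m" "x \<in> herm_kernel p m"
  thus "g x = x" by (rule part1)
next
  fix V :: "('i \<Rightarrow> complex) set"
  assume A: "csubspace V \<and> V \<noteq> UNIV \<and> (\<forall>g\<in>rho_group p m. g ` V \<subseteq> V)"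
  hence S: "csubspace V" and NU: "V \<noteq> UNIV" by auto
  have I: "\<And>i. refl p m i ` V \<subseteq> V"
    using A refl_in_group by blast
  have p2: "\<And>i. p i \<ge> 2" using assms(1) by (simp add: ext_coxeter_diagram_def)
  have propag: "basis_vec j \<in> V" if "basis_vec i \<in> V" "(i, j) \<in> {(a, b). is_edge m a b}\<^sup>*" for i j
    using that(2,1)
  proof (induction rule: rtrancl_induct)
    case base then show ?case by simp
  next
    case (step y z)
    hence "basis_vec y \<in> V" "is_edge m y z" by auto
    moreover have "alpha p m y z \<noteq> 0" using alpha_edge_ne0[OF assms(1) \<open>is_edge m y z\<close>] .
    ultimately show ?case
      using basis_in_V[OF S I, of "basis_vec y" z] p2 by (simp add: herm_basis_basis)
  qed
  have nob: "basis_vec i \<notin> V" for i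
  proof
    assume "basis_vec i \<in> V"
    hence all: "\<And>j. basis_vec j \<in> V" using propag assms(2) by (auto simp: diagram_connected_def)
    have "x \<in> V" for x
    proof -
      have "(\<lambda>k. \<Sum>j\<in>UNIV. x j * basis_vec j k) \<in> V" by (rule csubspace_sum[OF S all]) simp
      moreover have "(\<lambda>k. \<Sum>j\<in>UNIV. x j * basis_vec j k) = x"
        by (simp add: basis_vec_def fun_eq_iff if_distrib cong: if_cong)
      ultimately show ?thesis by simp
    qed
    thus False using NU by auto
  qed
  show "V \<subseteq> herm_kernel p m"
  proof
    fix v assume v: "v \<in> V"
    have "herm p m v (basis_vec j) = 0" for j
      using basis_in_V[OF S I v _ p2] nob by blast
    thus "v \<in> herm_kernel p m" unfolding herm_kernel_def
      by (subst herm_expand) simp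
  qed
qed

end
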